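(* For every item sequence $I\in(0,1]^n$, $MM_2(I)=OPT_2(I)$.
   Context: The $k$-cardinality constrained bin packing problem: an item sequence $I=(a_1,\dots,a_n)\in(0,1]^n$ must be packed into bins of capacity $1$ so that each bin contains at most $k$ items; $OPT_k(I)$ is the minimum possible number of non-empty bins, and $ALG(I)$ is the number of non-empty bins used by algorithm $ALG$. Algorithm $MM_k$: sort the items in non-increasing order; keep a single open bin with load $S$. Repeat while items remain: if the open bin already contains $k$ items, close it and open a new bin; else if the head (largest remaining) item fits ($S+\text{head}\le1$) pack it; else if the tail (smallest remaining) item fits pack it; else close the open bin permanently and open a new empty bin. $MM_2$ is the case $k=2$. *)

theory Defs
  imports Main "HOL.Real"
begin

definition valid_packing :: "nat \<Rightarrow> real list \<Rightarrow> (nat \<Rightarrow> nat) \<Rightarrow> bool" where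
  "valid_packing k I f \<longleftrightarrow>
     (\<forall>b. card {i. i < length I \<and> f i = b} \<le> k
        \<and> (\<Sum>i\<in>{i. i < length I \<and> f i = b}. I ! i) \<le> 1)"

definition OPT :: "nat \<Rightarrow> real list \<Rightarrow> nat" where
  "OPT k I = (LEAST m. \<exists>f. valid_packing k I f \<and> card (f ` {..<length I}) = m)"

text \<open>Arguments: k, remaining items (sorted non-increasingly),
  number c of items in the open bin, load S of the open bin.
  Result: number of non-empty bins used from this state on (including the open bin).
  The branch "c = 0 and nothing fits" is unreachable for items in (0,1]
  (an empty bin of load 0 always accepts the head); it only ensures totality.\<close>
function mm_loop :: "nat \<Rightarrow> real list \<Rightarrow> nat \<Rightarrow> real \<Rightarrow> nat" where
  "mm_loop k xs c S =
    (if xs = [] then (if 0 < c then 1 else 0)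
     else if k \<le> c \<and> 0 < c then 1 + mm_loop k xs 0 0
     else if S + hd xs \<le> 1 then mm_loop k (tl xs) (Suc c) (S + hd xs)
     else if S + last xs \<le> 1 then mm_loop k (butlast xs) (Suc c) (S + last xs)
     else if 0 < c then 1 + mm_loop k xs 0 0
     else 0)"
  by pat_completeness auto
termination
  by (relation "measures [\<lambda>(k,xs,c,S). length xs, \<lambda>(k,xs,c,S). if 0 < c then 1 else 0]")
     (auto simp: length_greater_0_conv)

definition MM :: "nat \<Rightarrow> real list \<Rightarrow> nat" where
  "MM k I = mm_loop k (rev (sort I)) 0 0"

end

theory Submission imports Defs "HOL-Combinatorics.List_Permutation" begin


declare mm_loop.simps[simp del]

abbreviation G :: "real list \<Rightarrow> nat" where "G xs \<equiv> mm_loop 2 xs 0 0"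

lemma G_nil: "G [] = 0"
  by (subst mm_loop.simps) (simp del: mm_loop.simps)

lemma mm_two: "mm_loop 2 zs (Suc (Suc 0)) s = (if zs = [] then 1 else 1 + G zs)"
  by (subst mm_loop.simps) simp

lemma mm_one: "mm_loop 2 r (Suc 0) a = (if r = [] then 1 else if a + hd r \<le> 1 then 1 + G (tl r)
   else if a + last r \<le> 1 then 1 + G (butlast r) else 1 + G r)"
  by (subst mm_loop.simps) (auto simp: mm_two G_nil)

lemma G_cons: "a \<le> 1 \<Longrightarrow> G (a#r) = (if r = [] then 1 else if a + hd r \<le> 1 then 1 + G (tl r)
   else if a + last r \<le> 1 then 1 + G (butlast r) else 1 + G r)"
  by (subst mm_loop.simps) (simp add: mm_one)

definition valid2 :: "real list \<Rightarrow> (nat \<Rightarrow> nat) \<Rightarrow> bool" where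
  "valid2 xs f \<longleftrightarrow> (\<forall>i<length xs. \<forall>j<length xs. i \<noteq> j \<longrightarrow> f i = f j \<longrightarrow> xs!i + xs!j \<le> 1)
     \<and> (\<forall>i<length xs. \<forall>j<length xs. \<forall>l<length xs. i\<noteq>j \<longrightarrow> i\<noteq>l \<longrightarrow> j\<noteq>l \<longrightarrow> f i = f j \<longrightarrow> f i = f l \<longrightarrow> False)"

lemma valid2_tri:
  assumes "valid2 xs f" "i < length xs" "i' < length xs" "i'' < length xs"
     "i \<noteq> i'" "i \<noteq> i''" "i' \<noteq> i''" "f i = f i'" "f i = f i''"
  shows False
proof -
  have H: "\<forall>i<length xs. \<forall>j<length xs. \<forall>l<length xs. i\<noteq>j \<longrightarrow> i\<noteq>l \<longrightarrow> j\<noteq>l \<longrightarrow> f i = f j \<longrightarrow> f i = f l \<longrightarrow> False"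
    using assms(1) unfolding valid2_def by (rule conjunct2)
  show False using H[rule_format, OF assms(2-9)] .
qed
lemma valid2_pr:
  assumes "valid2 xs f" "i < length xs" "i' < length xs" "i \<noteq> i'" "f i = f i'"
  shows "xs!i + xs!i' \<le> 1"
proof -
  have H: "\<forall>i<length xs. \<forall>j<length xs. i \<noteq> j \<longrightarrow> f i = f j \<longrightarrow> xs!i + xs!j \<le> 1"
    using assms(1) unfolding valid2_def by (rule conjunct1)
  show ?thesis using H[rule_format, OF assms(2-5)] .
qed

definition pos :: "real list \<Rightarrow> bool" where
  "pos xs \<longleftrightarrow> (\<forall>i<length xs. 0 < xs!i \<and> xs!i \<le> 1)"

lemma valid_imp2:
  assumes p: "pos xs" and v: "valid_packing 2 xs f"
  shows "valid2 xs f"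
  unfolding valid2_def
proof (intro conjI allI impI)
  fix i j assume ij: "i < length xs" "j < length xs" "i \<noteq> j" "f i = f j"
  let ?B = "{k. k < length xs \<and> f k = f i}"
  have "(\<Sum>k\<in>{i,j}. xs!k) \<le> (\<Sum>k\<in>?B. xs!k)"
    apply (rule sum_mono2) using ij p by (auto simp: pos_def less_imp_le)
  also have "\<dots> \<le> 1" using v unfolding valid_packing_def by blast
  finally show "xs!i + xs!j \<le> 1" using ij by simp
next
  fix i j l assume ij: "i < length xs" "j < length xs" "l < length xs" "i \<noteq> j" "i \<noteq> l" "j \<noteq> l" "f i = f j" "f i = f l"
  let ?B = "{k. k < length xs \<and> f k = f i}"
  have "card {i,j,l} \<le> card ?B"
    apply (rule card_mono) using ij by auto
  also have "\<dots> \<le> 2" using v unfolding valid_packing_def by blast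
  finally show False using ij by simp
qed


lemma valid2_imp:
  assumes p: "pos xs" and v: "valid2 xs f"
  shows "valid_packing 2 xs f"
  unfolding valid_packing_def
proof (intro allI conjI)
  fix b
  let ?B = "{k. k < length xs \<and> f k = b}"
  show "card ?B \<le> 2"
  proof (cases "\<exists>i j. ?B \<subseteq> {i, j}")
    case True
    then obtain i j where "?B \<subseteq> {i,j}" by blast
    hence "card ?B \<le> card {i,j}" by (intro card_mono) auto
    also have "\<dots> \<le> 2" by (simp add: card_insert_le_m1)
    finally show ?thesis .
  next
    case False
    then obtain i where i: "i \<in> ?B" by blast
    from False obtain j where j: "j \<in> ?B" "j \<noteq> i" by blast
    from False obtain l where l: "l \<in> ?B" "l \<noteq> i" "l \<noteq> j" by blast
    have False using v i j l unfolding valid2_def by (smt (verit) mem_Collect_eq)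
    thus ?thesis ..
  qed
  show "(\<Sum>i\<in>?B. xs ! i) \<le> 1"
  proof (cases "\<exists>i. ?B \<subseteq> {i}")
    case True
    then obtain i where "?B \<subseteq> {i}" by blast
    then have "?B = {} \<or> ?B = {i}" by blast
    then show ?thesis
    proof
      assume "?B = {}" then show ?thesis by (simp only:) simp
    next
      assume e: "?B = {i}" then have "i < length xs" by auto
      then show ?thesis using p e by (simp add: pos_def)
    qed
  next
    case F1: False
    then obtain i where i: "i \<in> ?B" by blast
    from F1 obtain j where j: "j \<in> ?B" "j \<noteq> i" by blast
    have "?B = {i,j}"
    proof (rule ccontr)
      assume "?B \<noteq> {i,j}"
      then obtain l where l: "l \<in> ?B" "l \<noteq> i" "l \<noteq> j" using i j by blast
      show False using v i j l unfolding valid2_def by (smt (verit) mem_Collect_eq)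
    qed
    moreover have "xs!i + xs!j \<le> 1" using v i j unfolding valid2_def by auto
    ultimately show ?thesis using j by simp
  qed
qed

lemma valid_iff: "pos xs \<Longrightarrow> valid_packing 2 xs f \<longleftrightarrow> valid2 xs f"
  using valid_imp2 valid2_imp by blast

lemma transport:
  assumes m: "mset xs = mset ys" and v: "valid2 xs f"
  shows "\<exists>f'. valid2 ys f' \<and> f' ` {..<length ys} = f ` {..<length xs}"
proof -
  from permutation_Ex_bij[of ys xs] m obtain p where
    p: "bij_betw p {..<length ys} {..<length xs}" "\<forall>i<length ys. ys ! i = xs ! (p i)"
    by auto
  have inj: "inj_on p {..<length ys}" and im: "p ` {..<length ys} = {..<length xs}"
    using p(1) unfolding bij_betw_def by auto
  have lt: "\<And>i. i < length ys \<Longrightarrow> p i < length xs" using im by auto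
  have "valid2 ys (f \<circ> p)"
    unfolding valid2_def
  proof (intro conjI allI impI)
    fix i j assume "i < length ys" "j < length ys" "i \<noteq> j" "(f \<circ> p) i = (f \<circ> p) j"
    moreover then have "p i \<noteq> p j" using inj by (meson inj_onD lessThan_iff)
    ultimately show "ys ! i + ys ! j \<le> 1" using v p(2) lt unfolding valid2_def by auto
  next
    fix i j l assume a: "i < length ys" "j < length ys" "l < length ys" "i \<noteq> j" "i \<noteq> l" "j \<noteq> l"
      "(f \<circ> p) i = (f \<circ> p) j" "(f \<circ> p) i = (f \<circ> p) l"
    then have "p i \<noteq> p j" "p i \<noteq> p l" "p j \<noteq> p l" using inj by (meson inj_onD lessThan_iff)+
    then show False using v a lt unfolding valid2_def by (metis comp_apply)
  qed
  moreover have "(f \<circ> p) ` {..<length ys} = f ` (p ` {..<length ys})" by (rule image_comp[symmetric])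
  then have "(f \<circ> p) ` {..<length ys} = f ` {..<length xs}" using im by simp
  ultimately show ?thesis by blast
qed

lemma embed:
  assumes v: "valid2 ys g"
  and P: "P \<subseteq> {..<length xs}" "P \<noteq> {}"
  and Pp: "\<forall>i\<in>P. \<forall>j\<in>P. i \<noteq> j \<longrightarrow> xs!i + xs!j \<le> 1"
  and P3: "\<forall>i\<in>P. \<forall>j\<in>P. \<forall>l\<in>P. i\<noteq>j \<longrightarrow> i\<noteq>l \<longrightarrow> j\<noteq>l \<longrightarrow> False"
  and s: "bij_betw s ({..<length xs} - P) {..<length ys}"
  and val: "\<forall>i\<in>{..<length xs} - P. xs!i = ys!(s i)"
  shows "\<exists>f. valid2 xs f \<and> card (f ` {..<length xs}) = Suc (card (g ` {..<length ys}))"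
proof -
  define f where "f i = (if i \<in> P then 0 else Suc (g (s i)))" for i
  have inj: "inj_on s ({..<length xs} - P)" and im: "s ` ({..<length xs} - P) = {..<length ys}"
    using s unfolding bij_betw_def by auto
  have lt: "\<And>i. i < length xs \<Longrightarrow> i \<notin> P \<Longrightarrow> s i < length ys" using im by auto
  have "f ` {..<length xs} = f ` P \<union> f ` ({..<length xs} - P)" using P by blast
  also have "f ` P = {0}" using P by (auto simp: f_def)
  also have "f ` ({..<length xs} - P) = Suc ` g ` s ` ({..<length xs} - P)"
    by (auto simp: f_def image_comp)
  also have "\<dots> = Suc ` g ` {..<length ys}" using im by simp
  finally have fim: "f ` {..<length xs} = insert 0 (Suc ` g ` {..<length ys})" by simp
  have "card (f ` {..<length xs}) = Suc (card (g ` {..<length ys}))"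
    unfolding fim by (subst card_insert_disjoint) (auto simp: card_image)
  moreover have "valid2 xs f"
    unfolding valid2_def
  proof (intro conjI allI impI)
    fix i j assume a: "i < length xs" "j < length xs" "i \<noteq> j" "f i = f j"
    show "xs ! i + xs ! j \<le> 1"
    proof (cases "i \<in> P")
      case True
      then have "j \<in> P" using a by (auto simp: f_def split: if_splits)
      then show ?thesis using Pp True a by blast
    next
      case False
      then have j: "j \<notin> P" using a by (auto simp: f_def split: if_splits)
      then have "s i \<noteq> s j" using inj a False by (meson DiffI inj_onD lessThan_iff)
      moreover have "g (s i) = g (s j)" using a False j by (simp add: f_def)
      ultimately have "ys ! (s i) + ys ! (s j) \<le> 1" using v lt a False j unfolding valid2_def by blast
      then show ?thesis using val a False j by simp
    qed
  next
    fix i j l assume a: "i < length xs" "j < length xs" "l < length xs" "i \<noteq> j" "i \<noteq> l" "j \<noteq> l"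
      "f i = f j" "f i = f l"
    show False
    proof (cases "i \<in> P")
      case True
      then have "j \<in> P" "l \<in> P" using a by (auto simp: f_def split: if_splits)
      then show ?thesis using P3 True a by blast
    next
      case False
      then have j: "j \<notin> P" "l \<notin> P" using a by (auto simp: f_def split: if_splits)
      then have "s i \<noteq> s j" "s i \<noteq> s l" "s j \<noteq> s l" using inj a False by (meson DiffI inj_onD lessThan_iff)+
      moreover have "g (s i) = g (s j)" "g (s i) = g (s l)" using a False j by (simp_all add: f_def)
      ultimately show False using v lt a False j unfolding valid2_def by blast
    qed
  qed
  ultimately show ?thesis by blast
qed

definition desc :: "real list \<Rightarrow> bool" where
  "desc xs \<longleftrightarrow> (\<forall>i j. i \<le> j \<longrightarrow> j < length xs \<longrightarrow> xs!j \<le> xs!i)"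

lemma desc_tl: assumes "desc xs" shows "desc (tl xs)"
  unfolding desc_def
proof (intro allI impI)
  fix i j assume "i \<le> j" "j < length (tl xs)"
  then show "tl xs ! j \<le> tl xs ! i" using assms unfolding desc_def by (simp add: nth_tl)
qed

lemma desc_butlast: "desc xs \<Longrightarrow> desc (butlast xs)"
  unfolding desc_def by (simp add: nth_butlast)

lemma pos_tl: "pos xs \<Longrightarrow> pos (tl xs)"
  unfolding pos_def by (cases xs) auto

lemma pos_butlast: "pos xs \<Longrightarrow> pos (butlast xs)"
  unfolding pos_def by (simp add: nth_butlast)

lemma construct:
  "pos xs \<Longrightarrow> desc xs \<Longrightarrow> \<exists>f. valid2 xs f \<and> card (f ` {..<length xs}) = G xs"
proof (induction "length xs" arbitrary: xs rule: less_induct)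
  case less
  show ?case
  proof (cases xs)
    case Nil
    then show ?thesis by (auto simp: G_nil valid2_def)
  next
    case (Cons a r)
    have a1: "a \<le> 1" using less.prems Cons by (auto simp: pos_def)
    have a0: "xs ! 0 = a" using Cons by simp
    show ?thesis
    proof (cases "r = []")
      case True
      then show ?thesis using Cons a1 G_cons[OF a1, of r]
        by (intro exI[of _ "\<lambda>_. 0"]) (auto simp: valid2_def)
    next
      case rne: False
      have lenr: "length r = length xs - 1" "length xs = Suc (length r)" using Cons by auto
      have nthr: "\<And>k. k < length r \<Longrightarrow> r ! k = xs ! Suc k" using Cons by simp
      show ?thesis
      proof (cases "a + hd r \<le> 1")
        case True
        let ?ys = "tl r"
        have Gx: "G xs = Suc (G ?ys)" using G_cons[OF a1, of r] True rne Cons by simp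
        have "length ?ys < length xs" using Cons by simp
        moreover have "pos ?ys" "desc ?ys" using less.prems Cons pos_tl[of r] desc_tl[of r] pos_tl[of xs] desc_tl[of xs] by simp_all
        ultimately obtain g where g: "valid2 ?ys g" "card (g ` {..<length ?ys}) = G ?ys"
          using less.hyps by blast
        have h1: "xs ! 1 = hd r" using Cons rne by (cases r) auto
        have "\<exists>f. valid2 xs f \<and> card (f ` {..<length xs}) = Suc (card (g ` {..<length ?ys}))"
        proof (rule embed[OF g(1), of "{0,1}" xs "\<lambda>i. i - 2"])
          show "{0, 1} \<subseteq> {..<length xs}" using rne lenr by (cases r) auto
          show "\<forall>i\<in>{0, 1}. \<forall>j\<in>{0, 1}. i \<noteq> j \<longrightarrow> xs ! i + xs ! j \<le> 1"
            using True a0 h1 by auto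
          show "bij_betw (\<lambda>i. i - 2) ({..<length xs} - {0, 1}) {..<length ?ys}"
            by (rule bij_betw_byWitness[where f'="\<lambda>k. k + 2"]) (auto simp: lenr(2))
          show "\<forall>i\<in>{..<length xs} - {0, 1}. xs ! i = ?ys ! (i - 2)"
          proof
            fix i assume i: "i \<in> {..<length xs} - {0, 1}"
            then obtain k where k: "i = Suc (Suc k)" by (metis One_nat_def DiffE insertCI not0_implies_Suc)
            then show "xs ! i = ?ys ! (i - 2)" using i Cons by (simp add: nth_tl)
          qed
        qed auto
        then show ?thesis using g Gx by simp
      next
        case F1: False
        show ?thesis
        proof (cases "a + last r \<le> 1")
          case True
          let ?ys = "butlast r"
          have Gx: "G xs = Suc (G ?ys)" using G_cons[OF a1, of r] True F1 rne Cons by simp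
          have "length ?ys < length xs" using Cons by simp
          moreover have "pos ?ys" "desc ?ys" using less.prems Cons pos_butlast[of r] desc_butlast[of r] pos_tl[of xs] desc_tl[of xs]
            by simp_all
          ultimately obtain g where g: "valid2 ?ys g" "card (g ` {..<length ?ys}) = G ?ys"
            using less.hyps by blast
          have hl: "xs ! (length xs - 1) = last r" using Cons rne by (simp add: last_conv_nth)
          have "length r \<noteq> 1" using F1 True rne by (cases r) auto
          moreover have "length r \<noteq> 0" using rne by simp
          ultimately have n3: "length xs \<ge> 3" using lenr(2) by linarith
          have "\<exists>f. valid2 xs f \<and> card (f ` {..<length xs}) = Suc (card (g ` {..<length ?ys}))"
          proof (rule embed[OF g(1), of "{0, length xs - 1}" xs "\<lambda>i. i - 1"])
            show "{0, length xs - 1} \<subseteq> {..<length xs}" using n3 by auto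
            show "\<forall>i\<in>{0, length xs - 1}. \<forall>j\<in>{0, length xs - 1}. i \<noteq> j \<longrightarrow> xs ! i + xs ! j \<le> 1"
              using True a0 hl by auto
            show "bij_betw (\<lambda>i. i - 1) ({..<length xs} - {0, length xs - 1}) {..<length ?ys}"
              by (rule bij_betw_byWitness[where f'="\<lambda>k. k + 1"]) (auto simp: lenr(2))
            show "\<forall>i\<in>{..<length xs} - {0, length xs - 1}. xs ! i = ?ys ! (i - 1)"
            proof
              fix i assume i: "i \<in> {..<length xs} - {0, length xs - 1}"
              then obtain k where k: "i = Suc k" by (metis DiffE insertCI not0_implies_Suc)
              moreover have "k < length r - 1" using i k Cons by auto
              ultimately show "xs ! i = ?ys ! (i - 1)" using Cons by (simp add: nth_butlast)
            qed
          qed auto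
          then show ?thesis using g Gx by simp
        next
          case False
          let ?ys = "r"
          have Gx: "G xs = Suc (G ?ys)" using G_cons[OF a1, of r] False F1 rne Cons by simp
          have "length ?ys < length xs" using Cons by simp
          moreover have "pos ?ys" "desc ?ys" using less.prems Cons pos_tl[of xs] desc_tl[of xs]
            by simp_all
          ultimately obtain g where g: "valid2 ?ys g" "card (g ` {..<length ?ys}) = G ?ys"
            using less.hyps by blast
          have "\<exists>f. valid2 xs f \<and> card (f ` {..<length xs}) = Suc (card (g ` {..<length ?ys}))"
          proof (rule embed[OF g(1), of "{0}" xs "\<lambda>i. i - 1"])
            show "{0} \<subseteq> {..<length xs}" using Cons by auto
            show "bij_betw (\<lambda>i. i - 1) ({..<length xs} - {0}) {..<length ?ys}"
              by (rule bij_betw_byWitness[where f'="\<lambda>k. k + 1"]) (auto simp: lenr(2))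
            show "\<forall>i\<in>{..<length xs} - {0}. xs ! i = ?ys ! (i - 1)"
            proof
              fix i assume i: "i \<in> {..<length xs} - {0}"
              then obtain k where k: "i = Suc k" by (metis DiffE insertCI not0_implies_Suc)
              then show "xs ! i = ?ys ! (i - 1)" using i Cons by simp
            qed
          qed auto
          then show ?thesis using g Gx by simp
        qed
      qed
    qed
  qed
qed

lemma count_bins:
  assumes p: "pos xs" and v: "valid2 xs f"
  shows "length xs \<le> 2 * card (f ` {..<length xs})"
proof -
  have vp: "valid_packing 2 xs f" using valid2_imp[OF p v] .
  have "length xs = card {..<length xs}" by simp
  also have "\<dots> = (\<Sum>i\<in>{..<length xs}. (1::nat))" by simp
  also have "\<dots> = (\<Sum>b\<in>f ` {..<length xs}. \<Sum>i\<in>{x. x \<in> {..<length xs} \<and> f x = b}. (1::nat))"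
    by (rule sum.image_gen) simp
  also have "\<dots> = (\<Sum>b\<in>f ` {..<length xs}. card {i. i < length xs \<and> f i = b})" by simp
  also have "\<dots> \<le> (\<Sum>b\<in>f ` {..<length xs}. 2)"
    by (rule sum_mono) (use vp in \<open>auto simp: valid_packing_def\<close>)
  also have "\<dots> = 2 * card (f ` {..<length xs})" by simp
  finally show ?thesis .
qed

lemma halfB:
  "pos xs \<Longrightarrow> desc xs \<Longrightarrow> 2 \<le> length xs \<Longrightarrow> xs!0 + xs!1 \<le> 1 \<Longrightarrow> G xs \<le> (length xs + 1) div 2"
proof (induction "length xs" arbitrary: xs rule: less_induct)
  case less
  obtain a b t where xs: "xs = a # b # t" using less.prems(3)
    by (cases xs; cases "tl xs") auto
  have a1: "a \<le> 1" using less.prems(1) xs by (auto simp: pos_def)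
  have Gx: "G xs = Suc (G t)" using G_cons[OF a1, of "b # t"] less.prems(4) xs by simp
  show ?case
  proof (cases t)
    case Nil
    then show ?thesis using Gx G_nil xs by simp
  next
    case (Cons c u)
    show ?thesis
    proof (cases u)
      case Nil
      have "c \<le> 1" using less.prems(1)[unfolded pos_def, rule_format, of 2] xs Cons by simp
      then have "G t = 1" using G_cons[of c "[]"] Cons Nil by simp
      then show ?thesis using Gx xs Cons Nil by simp
    next
      case (Cons d w)
      have pt: "pos t" using less.prems(1) xs pos_tl[of xs] pos_tl[of "tl xs"] by simp
      have dt: "desc t" using less.prems(2) xs desc_tl[of xs] desc_tl[of "tl xs"] by simp
      have dd: "\<forall>i j. i \<le> j \<longrightarrow> j < length xs \<longrightarrow> xs!j \<le> xs!i" using less.prems(2) unfolding desc_def .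
      have t0: "t!0 \<le> xs!0" using dd[rule_format, of 0 2] xs Cons \<open>t = c # u\<close> by simp
      have t1: "t!1 \<le> xs!1" using dd[rule_format, of 1 3] xs Cons \<open>t = c # u\<close> by simp
      have "t!0 + t!1 \<le> 1" using less.prems(4) t0 t1 by linarith
      moreover have "2 \<le> length t" using Cons \<open>t = c # u\<close> by simp
      ultimately have "G t \<le> (length t + 1) div 2" using less.hyps[of t] xs pt dt by simp
      then show ?thesis using Gx xs by simp
    qed
  qed
qed




lemma valid2_shift:
  assumes v: "valid2 xs f" and lt: "\<forall>k<length ys. s k < length xs" and inj: "inj_on s {..<length ys}"
    and val: "\<forall>k<length ys. ys!k = xs!(s k)"
  shows "valid2 ys (f \<circ> s)"
  unfolding valid2_def
proof (intro conjI allI impI)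
  fix i j assume a: "i < length ys" "j < length ys" "i \<noteq> j" "(f \<circ> s) i = (f \<circ> s) j"
  moreover then have "s i \<noteq> s j" using inj by (meson inj_onD lessThan_iff)
  ultimately show "ys ! i + ys ! j \<le> 1" using v lt val unfolding valid2_def by auto
next
  fix i j l assume a: "i < length ys" "j < length ys" "l < length ys" "i \<noteq> j" "i \<noteq> l" "j \<noteq> l"
    "(f \<circ> s) i = (f \<circ> s) j" "(f \<circ> s) i = (f \<circ> s) l"
  then have "s i \<noteq> s j" "s i \<noteq> s l" "s j \<noteq> s l" using inj by (meson inj_onD lessThan_iff)+
  then show False using v a lt unfolding valid2_def by (metis comp_apply)
qed

lemma card_less:
  assumes "finite B" "A \<subseteq> B - {x}" "x \<in> B"
  shows "card A + 1 \<le> card B"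
proof -
  have "card A \<le> card (B - {x})" using assms by (intro card_mono) auto
  also have "\<dots> = card B - 1" using assms by simp
  finally have "card A \<le> card B - 1" .
  moreover have "card B > 0" using assms card_gt_0_iff by blast
  ultimately show ?thesis by linarith
qed

lemma lower:
  "pos xs \<Longrightarrow> desc xs \<Longrightarrow> valid2 xs f \<Longrightarrow> G xs \<le> card (f ` {..<length xs})"
proof (induction "length xs" arbitrary: xs f rule: less_induct)
  case less
  note p = less.prems(1) and d = less.prems(2) and v = less.prems(3)
  show ?case
  proof (cases xs)
    case Nil
    then show ?thesis by (simp add: G_nil)
  next
    case (Cons a r)
    have a1: "a \<le> 1" using p Cons by (auto simp: pos_def)
    have a0: "xs ! 0 = a" using Cons by simp
    have fin: "finite (f ` {..<length xs})" by simp
    have f0: "f 0 \<in> f ` {..<length xs}" using Cons by simp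
    note pr = valid2_pr[OF v]
    have dd: "\<And>i i'. i \<le> i' \<Longrightarrow> i' < length xs \<Longrightarrow> xs!i' \<le> xs!i"
      using d unfolding desc_def by blast
    show ?thesis
    proof (cases "r = []")
      case True
      then show ?thesis using Cons G_cons[OF a1, of r] by (simp del: mm_loop.simps add: lessThan_Suc)
    next
      case rne: False
      have lenr: "length xs = Suc (length r)" using Cons by auto
      have nthr: "\<And>k. r ! k = xs ! Suc k" using Cons by simp
      have hl: "xs ! (length xs - 1) = last r" using Cons rne by (simp add: last_conv_nth)
      show ?thesis
      proof (cases "a + hd r \<le> 1")
        case True
        have h1: "xs ! 1 = hd r" using Cons rne by (cases r) auto
        have "G xs \<le> (length xs + 1) div 2"
          using halfB[OF p d] True h1 a0 rne lenr by (cases r) auto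
        moreover have "length xs \<le> 2 * card (f ` {..<length xs})" using count_bins[OF p v] .
        ultimately show ?thesis by linarith
      next
        case F1: False
        show ?thesis
        proof (cases "a + last r \<le> 1")
          case False
          have Gx: "G xs = Suc (G r)" using G_cons[OF a1, of r] False F1 rne Cons by simp
          have vr: "valid2 r (f \<circ> Suc)"
            by (rule valid2_shift[OF v]) (auto simp: lenr nthr)
          have "G r \<le> card ((f \<circ> Suc) ` {..<length r})"
            using less.hyps[of r "f \<circ> Suc"] vr p d Cons pos_tl[of xs] desc_tl[of xs] by simp
          moreover have sub: "(f \<circ> Suc) ` {..<length r} \<subseteq> f ` {..<length xs} - {f 0}"
          proof
            fix y assume "y \<in> (f \<circ> Suc) ` {..<length r}"
            then obtain k where k: "k < length r" "y = f (Suc k)" by auto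
            have "f (Suc k) \<noteq> f 0"
            proof
              assume "f (Suc k) = f 0"
              then have "xs ! Suc k + xs ! 0 \<le> 1" using pr[of "Suc k" 0] k lenr by simp
              moreover have "xs ! (length xs - 1) \<le> xs ! Suc k" using dd[of "Suc k" "length xs - 1"] k lenr by simp
              ultimately show False using False a0 hl by linarith
            qed
            then show "y \<in> f ` {..<length xs} - {f 0}" using k lenr by auto
          qed
          ultimately show ?thesis using Gx card_less[OF fin sub f0] by linarith
        next
          case True
          let ?ys = "butlast r"
          have Gx: "G xs = Suc (G ?ys)" using G_cons[OF a1, of r] True F1 rne Cons by simp
          have pys: "pos ?ys" "desc ?ys" using p d Cons pos_butlast[of r] desc_butlast[of r] pos_tl[of xs] desc_tl[of xs]
            by simp_all
          have "length r \<noteq> 1" using F1 True rne by (cases r) auto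
          moreover have "length r \<noteq> 0" using rne by simp
          ultimately have n3: "length xs \<ge> 3" using lenr by linarith
          have lys: "length ?ys = length xs - 2" using lenr by simp
          have nys: "\<And>k. k < length ?ys \<Longrightarrow> ?ys ! k = xs ! Suc k" using lenr by (simp add: nth_butlast nthr)
          show ?thesis
          proof (cases "\<exists>j. 0 < j \<and> j < length xs - 1 \<and> f j = f 0")
            case False
            have vr: "valid2 ?ys (f \<circ> Suc)"
              by (rule valid2_shift[OF v]) (auto simp: lys nys lenr)
            have "G ?ys \<le> card ((f \<circ> Suc) ` {..<length ?ys})"
              using less.hyps[of ?ys "f \<circ> Suc"] vr pys lys n3 by simp
            moreover have sub: "(f \<circ> Suc) ` {..<length ?ys} \<subseteq> f ` {..<length xs} - {f 0}"
            proof
              fix y assume "y \<in> (f \<circ> Suc) ` {..<length ?ys}"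
              then obtain k where k: "k < length ?ys" "y = f (Suc k)" by auto
              have "Suc k < length xs - 1" using k lys by linarith
              then have "f (Suc k) \<noteq> f 0" using False by blast
              then show "y \<in> f ` {..<length xs} - {f 0}" using k lys by auto
            qed
            ultimately show ?thesis using Gx card_less[OF fin sub f0] by linarith
          next
            case True
            then obtain j where j: "0 < j" "j < length xs - 1" "f j = f 0" by blast
            define h where "h k = (if Suc k = j then f (length xs - 1) else f (Suc k))" for k
            have pj: "xs ! 0 + xs ! j \<le> 1" using pr[of 0 j] j Cons by auto
            note tri = valid2_tri[OF v]
            have others: "\<And>i. i < length xs \<Longrightarrow> i \<noteq> 0 \<Longrightarrow> i \<noteq> j \<Longrightarrow> f i \<noteq> f 0"
            proof
              fix i assume hi: "i < length xs" "i \<noteq> 0" "i \<noteq> j" "f i = f 0"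
              show False by (rule tri[of 0 j i]) (use hi j in auto)
            qed
            have bound: "\<And>i. i < length xs \<Longrightarrow> xs ! i \<le> xs ! 0" using dd by simp
            have vh: "valid2 ?ys h"
              unfolding valid2_def
            proof (intro conjI allI impI)
              fix k k' assume a: "k < length ?ys" "k' < length ?ys" "k \<noteq> k'" "h k = h k'"
              show "?ys ! k + ?ys ! k' \<le> 1"
              proof (cases "Suc k = j")
                case True
                have "xs ! Suc k' \<le> xs ! 0" using bound a lys by simp
                moreover have "?ys ! k = xs ! j" "?ys ! k' = xs ! Suc k'" using nys a True by auto
                ultimately show ?thesis using pj by linarith
              next
                case False
                show ?thesis
                proof (cases "Suc k' = j")
                  case True
                  have "xs ! Suc k \<le> xs ! 0" using bound a lys by simp
                  moreover have "?ys ! k' = xs ! j" "?ys ! k = xs ! Suc k" using nys a True by auto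
                  ultimately show ?thesis using pj by linarith
                next
                  case False2: False
                  then have "f (Suc k) = f (Suc k')" using a False unfolding h_def by auto
                  then have "xs ! Suc k + xs ! Suc k' \<le> 1" using pr[of "Suc k" "Suc k'"] a lys by simp
                  then show ?thesis using nys a by simp
                qed
              qed
            next
              fix k k' k'' assume a: "k < length ?ys" "k' < length ?ys" "k'' < length ?ys"
                "k \<noteq> k'" "k \<noteq> k''" "k' \<noteq> k''" "h k = h k'" "h k = h k''"
              have ln: "Suc k < length xs - 1" "Suc k' < length xs - 1" "Suc k'' < length xs - 1" using a lys by auto
              have nl: "length xs - 1 < length xs" using n3 by simp
              have ne: "Suc k \<noteq> length xs - 1" "Suc k' \<noteq> length xs - 1" "Suc k'' \<noteq> length xs - 1"
                using ln by auto
              show False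
              proof (cases "Suc k = j")
                case True
                then have "Suc k' \<noteq> j" "Suc k'' \<noteq> j" using a by auto
                then have e: "f (Suc k') = f (length xs - 1)" "f (Suc k'') = f (length xs - 1)"
                  using a True unfolding h_def by auto
                show False
                  by (rule tri[of "Suc k'" "Suc k''" "length xs - 1"]) (use e a ln nl ne in auto)
              next
                case F: False
                show False
                proof (cases "Suc k' = j")
                  case True
                  then have "Suc k'' \<noteq> j" using a by auto
                  then have e: "f (Suc k) = f (length xs - 1)" "f (Suc k'') = f (length xs - 1)"
                    using a True F unfolding h_def by auto
                  show False
                    by (rule tri[of "Suc k" "Suc k''" "length xs - 1"]) (use e a ln nl ne in auto)
                next
                  case F2: False
                  show False
                  proof (cases "Suc k'' = j")
                    case True
                    then have e: "f (Suc k) = f (length xs - 1)" "f (Suc k') = f (length xs - 1)"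
                      using a True F F2 unfolding h_def by auto
                    show False
                      by (rule tri[of "Suc k" "Suc k'" "length xs - 1"]) (use e a ln nl ne in auto)
                  next
                    case False
                    then have e: "f (Suc k) = f (Suc k')" "f (Suc k) = f (Suc k'')"
                      using a F F2 unfolding h_def by auto
                    show False
                      by (rule tri[of "Suc k" "Suc k'" "Suc k''"]) (use e a ln in auto)
                  qed
                qed
              qed
            qed
            have "G ?ys \<le> card (h ` {..<length ?ys})"
              using less.hyps[of ?ys h] vh pys lys n3 by simp
            moreover have sub: "h ` {..<length ?ys} \<subseteq> f ` {..<length xs} - {f 0}"
            proof
              fix y assume "y \<in> h ` {..<length ?ys}"
              then obtain k where k: "k < length ?ys" "y = h k" by auto
              show "y \<in> f ` {..<length xs} - {f 0}"
              proof (cases "Suc k = j")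
                case True
                then have "y = f (length xs - 1)" using k by (simp add: h_def)
                moreover have "f (length xs - 1) \<noteq> f 0" using others[of "length xs - 1"] j n3 by auto
                ultimately show ?thesis using n3 by auto
              next
                case False
                then have "y = f (Suc k)" using k by (simp add: h_def)
                moreover have "f (Suc k) \<noteq> f 0" using others[of "Suc k"] False k lys by auto
                ultimately show ?thesis using k lys by auto
              qed
            qed
            ultimately show ?thesis using Gx card_less[OF fin sub f0] by linarith
          qed
        qed
      qed
    qed
  qed
qed


theorem theorem7:
  fixes I :: "real list"
  assumes "\<forall>x\<in>set I. 0 < x \<and> x \<le> 1"
  shows "MM 2 I = OPT 2 I"
proof -
  define ys where "ys = rev (sort I)"
  have ms: "mset ys = mset I" by (simp add: ys_def)
  have len: "length ys = length I" by (simp add: ys_def)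
  have posI: "pos I" using assms unfolding pos_def by (auto dest: nth_mem)
  have "set ys = set I" by (simp add: ys_def)
  then have posY: "pos ys" using assms unfolding pos_def by (auto dest: nth_mem)
  have descY: "desc ys"
    unfolding desc_def
  proof (intro allI impI)
    fix i j assume ij: "i \<le> j" "j < length ys"
    have s: "sorted (sort I)" by simp
    have "ys ! j = sort I ! (length I - Suc j)" "ys ! i = sort I ! (length I - Suc i)"
      using ij len by (simp_all add: ys_def rev_nth)
    moreover have "sort I ! (length I - Suc j) \<le> sort I ! (length I - Suc i)"
      by (rule sorted_nth_mono[OF s]) (use ij len in auto)
    ultimately show "ys ! j \<le> ys ! i" by simp
  qed
  have MMe: "MM 2 I = G ys" by (simp add: MM_def ys_def)
  have "(LEAST m. \<exists>f. valid_packing 2 I f \<and> card (f ` {..<length I}) = m) = G ys"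
  proof (rule Least_equality)
    obtain g where g: "valid2 ys g" "card (g ` {..<length ys}) = G ys"
      using construct[OF posY descY] by blast
    obtain f where f: "valid2 I f" "f ` {..<length I} = g ` {..<length ys}"
      using transport[OF ms g(1)] by blast
    show "\<exists>f. valid_packing 2 I f \<and> card (f ` {..<length I}) = G ys"
      using f g valid_iff[OF posI] by auto
  next
    fix m assume "\<exists>f. valid_packing 2 I f \<and> card (f ` {..<length I}) = m"
    then obtain f where f: "valid_packing 2 I f" "card (f ` {..<length I}) = m" by blast
    have "valid2 I f" using f(1) valid_iff[OF posI] by blast
    then obtain g where g: "valid2 ys g" "g ` {..<length ys} = f ` {..<length I}"
      using transport[OF ms[symmetric]] by blast
    have "G ys \<le> card (g ` {..<length ys})" by (rule lower[OF posY descY g(1)])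
    then show "G ys \<le> m" using g(2) f(2) by simp
  qed
  then show ?thesis unfolding OPT_def MMe by simp
qed

end
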